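(* Let $\mathcal{H}$ be a complex separable Hilbert space and $\mathcal{E}(\mathcal{H})$ its set of effects. For $A\in\mathcal{E}(\mathcal{H})$ with spectrum $\sigma_A$ let $M=\max\sigma_A$, $m=\min\sigma_A$, $a_0=\tfrac12(M+m)$ and $\delta=\min_{\lambda\in\sigma_A}(\lambda-a_0)^2$. Define $$\mathcal{F}_5(A):=\sqrt{\tfrac12(a_0^2-\delta)+\tfrac12Mm}+\sqrt{\tfrac12((1-a_0)^2-\delta)+\tfrac12(1-M)(1-m)},$$ $$\mathcal{B}_5(A):=\sqrt{\tfrac12(a_0^2-\delta)+\tfrac12Mm}-\sqrt{\tfrac12((1-a_0)^2-\delta)+\tfrac12(1-M)(1-m)}.$$ Then $\mathcal{F}_5$ is an unsharpness measure on $\mathcal{E}(\mathcal{H})$ and $\mathcal{B}_5$ is a bias measure on $\mathcal{E}(\mathcal{H})$.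
   Context: An effect is a selfadjoint bounded operator $A$ with $\mathbb{O}\le A\le I$; $A'=I-A$. An effect is trivial if $A=\lambda I$, $\lambda\in[0,1]$; a nontrivial projection is a projection other than $\mathbb{O},I$. A sharpness measure is a function $\mathcal{S}:\mathcal{E}(\mathcal{H})\to\mathbb{R}$ with: (S1) $0\le\mathcal{S}(A)\le1$; (S2) $\mathcal{S}(A)=0$ iff $A$ is trivial; (S3) $\mathcal{S}(A)=1$ iff $A$ is a nontrivial projection; (S4) $\mathcal{S}(A')=\mathcal{S}(A)$; (S5) $\mathcal{S}(CAC^{-1})=\mathcal{S}(A)$ for every invertible bounded $C$ such that $CAC^{-1}$ is an effect; (S6) operator-norm continuity. A function $\mathcal{F}$ is an unsharpness measure if $A\mapsto 1-\mathcal{F}(A)$ is a sharpness measure (so $\mathcal{F}(A)=1$ iff $A$ is trivial and $\mathcal{F}(A)=0$ iff $A$ is a nontrivial projection). A bias measure is a function $\mathcal{B}:\mathcal{E}(\mathcal{H})\to\mathbb{R}$ with: (B1) $-1\le\mathcal{B}(A)\le1$; (B2) $\mathcal{B}(A)=0$ iff $\tfrac12(\max\sigma_A+\min\sigma_A)=\tfrac12$; (B3) $\mathcal{B}(A)=1$ iff $A=I$, and $\mathcal{B}(A)=-1$ iff $A=\mathbb{O}$; (B4) $\mathcal{B}(A')=-\mathcal{B}(A)$; (B5) $\mathcal{B}(CAC^{-1})=\mathcal{B}(A)$ for every invertible bounded $C$ such that $CAC^{-1}$ is an effect; (B6) operator-norm continuity. *)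

theory Defs
  imports "HOL-Analysis.Analysis"
begin

text \<open>A complex Hilbert space is modelled as a real Hilbert space (type class
real_inner + complete_space, the real inner product being the real part of the
complex one) together with a complex structure J (multiplication by i), which
is a real-linear isometric operator with J o J = -I.\<close>

definition complex_structure :: "('a::real_inner \<Rightarrow>\<^sub>L 'a) \<Rightarrow> bool" where
  "complex_structure J \<longleftrightarrow>
     (\<forall>x. J (J x) = - x) \<and> (\<forall>x y. inner (J x) (J y) = inner x y)"

text \<open>Complex inner product, linear in the second argument.\<close>
definition cinner :: "('a::real_inner \<Rightarrow>\<^sub>L 'a) \<Rightarrow> 'a \<Rightarrow> 'a \<Rightarrow> complex" where
  "cinner J x y = Complex (inner x y) (inner (J x) y)"

definition clinear_op :: "('a::real_normed_vector \<Rightarrow>\<^sub>L 'a) \<Rightarrow> ('a \<Rightarrow>\<^sub>L 'a) \<Rightarrow> bool" where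
  "clinear_op J A \<longleftrightarrow> (\<forall>x. A (J x) = J (A x))"

definition cscal :: "('a::real_normed_vector \<Rightarrow>\<^sub>L 'a) \<Rightarrow> complex \<Rightarrow> ('a \<Rightarrow>\<^sub>L 'a)" where
  "cscal J c = Re c *\<^sub>R id_blinfun + Im c *\<^sub>R J"

definition selfadjoint :: "('a::real_inner \<Rightarrow>\<^sub>L 'a) \<Rightarrow> ('a \<Rightarrow>\<^sub>L 'a) \<Rightarrow> bool" where
  "selfadjoint J A \<longleftrightarrow> clinear_op J A \<and> (\<forall>x y. cinner J (A x) y = cinner J x (A y))"

text \<open>Effects: selfadjoint A with O \<le> A \<le> I (for selfadjoint A the quadratic form
  is real and equals the real inner product).\<close>
definition effects :: "('a::real_inner \<Rightarrow>\<^sub>L 'a) \<Rightarrow> ('a \<Rightarrow>\<^sub>L 'a) set" where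
  "effects J = {A. selfadjoint J A \<and> (\<forall>x. 0 \<le> inner x (A x) \<and> inner x (A x) \<le> inner x x)}"

definition invertible_op :: "('a::real_normed_vector \<Rightarrow>\<^sub>L 'a) \<Rightarrow> bool" where
  "invertible_op A \<longleftrightarrow> (\<exists>B. B o\<^sub>L A = id_blinfun \<and> A o\<^sub>L B = id_blinfun)"

definition spectrum :: "('a::real_normed_vector \<Rightarrow>\<^sub>L 'a) \<Rightarrow> ('a \<Rightarrow>\<^sub>L 'a) \<Rightarrow> complex set" where
  "spectrum J A = {c. \<not> invertible_op (A - cscal J c)}"

text \<open>Real points of the spectrum (for selfadjoint A this is the whole spectrum).\<close>
definition rspectrum :: "('a::real_normed_vector \<Rightarrow>\<^sub>L 'a) \<Rightarrow> ('a \<Rightarrow>\<^sub>L 'a) \<Rightarrow> real set" where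
  "rspectrum J A = {t. complex_of_real t \<in> spectrum J A}"

definition specmax :: "('a::real_normed_vector \<Rightarrow>\<^sub>L 'a) \<Rightarrow> ('a \<Rightarrow>\<^sub>L 'a) \<Rightarrow> real" where
  "specmax J A = Sup (rspectrum J A)"

definition specmin :: "('a::real_normed_vector \<Rightarrow>\<^sub>L 'a) \<Rightarrow> ('a \<Rightarrow>\<^sub>L 'a) \<Rightarrow> real" where
  "specmin J A = Inf (rspectrum J A)"

definition trivial_effect :: "('a::real_normed_vector \<Rightarrow>\<^sub>L 'a) \<Rightarrow> bool" where
  "trivial_effect A \<longleftrightarrow> (\<exists>l::real. 0 \<le> l \<and> l \<le> 1 \<and> A = l *\<^sub>R id_blinfun)"

definition nontrivial_projection :: "('a::real_inner \<Rightarrow>\<^sub>L 'a) \<Rightarrow> ('a \<Rightarrow>\<^sub>L 'a) \<Rightarrow> bool" where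
  "nontrivial_projection J A \<longleftrightarrow> selfadjoint J A \<and> A o\<^sub>L A = A \<and> A \<noteq> 0 \<and> A \<noteq> id_blinfun"

definition similarity_invariant ::
  "('a::real_inner \<Rightarrow>\<^sub>L 'a) \<Rightarrow> (('a \<Rightarrow>\<^sub>L 'a) \<Rightarrow> real) \<Rightarrow> bool" where
  "similarity_invariant J f \<longleftrightarrow>
     (\<forall>A\<in>effects J. \<forall>C Ci. clinear_op J C \<and> C o\<^sub>L Ci = id_blinfun \<and> Ci o\<^sub>L C = id_blinfun
        \<and> (C o\<^sub>L A o\<^sub>L Ci) \<in> effects J \<longrightarrow> f (C o\<^sub>L A o\<^sub>L Ci) = f A)"

definition sharpness_measure ::
  "('a::real_inner \<Rightarrow>\<^sub>L 'a) \<Rightarrow> (('a \<Rightarrow>\<^sub>L 'a) \<Rightarrow> real) \<Rightarrow> bool" where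
  "sharpness_measure J S \<longleftrightarrow>
     (\<forall>A\<in>effects J. 0 \<le> S A \<and> S A \<le> 1) \<and>
     (\<forall>A\<in>effects J. S A = 0 \<longleftrightarrow> trivial_effect A) \<and>
     (\<forall>A\<in>effects J. S A = 1 \<longleftrightarrow> nontrivial_projection J A) \<and>
     (\<forall>A\<in>effects J. S (id_blinfun - A) = S A) \<and>
     similarity_invariant J S \<and>
     continuous_on (effects J) S"

definition unsharpness_measure ::
  "('a::real_inner \<Rightarrow>\<^sub>L 'a) \<Rightarrow> (('a \<Rightarrow>\<^sub>L 'a) \<Rightarrow> real) \<Rightarrow> bool" where
  "unsharpness_measure J F \<longleftrightarrow> sharpness_measure J (\<lambda>A. 1 - F A)"

definition bias_measure ::
  "('a::real_inner \<Rightarrow>\<^sub>L 'a) \<Rightarrow> (('a \<Rightarrow>\<^sub>L 'a) \<Rightarrow> real) \<Rightarrow> bool" where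
  "bias_measure J B \<longleftrightarrow>
     (\<forall>A\<in>effects J. -1 \<le> B A \<and> B A \<le> 1) \<and>
     (\<forall>A\<in>effects J. B A = 0 \<longleftrightarrow> (specmax J A + specmin J A) / 2 = 1 / 2) \<and>
     (\<forall>A\<in>effects J. (B A = 1 \<longleftrightarrow> A = id_blinfun) \<and> (B A = -1 \<longleftrightarrow> A = 0)) \<and>
     (\<forall>A\<in>effects J. B (id_blinfun - A) = - B A) \<and>
     similarity_invariant J B \<and>
     continuous_on (effects J) B"

definition a0 :: "('a::real_normed_vector \<Rightarrow>\<^sub>L 'a) \<Rightarrow> ('a \<Rightarrow>\<^sub>L 'a) \<Rightarrow> real" where
  "a0 J A = (specmax J A + specmin J A) / 2"

text \<open>\<delta> = min over the spectrum of (\<lambda> - a0)^2 (the minimum is attained, spectrum compact).\<close>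
definition delta :: "('a::real_normed_vector \<Rightarrow>\<^sub>L 'a) \<Rightarrow> ('a \<Rightarrow>\<^sub>L 'a) \<Rightarrow> real" where
  "delta J A = Inf ((\<lambda>t. (t - a0 J A)^2) ` rspectrum J A)"

definition F5 :: "('a::real_normed_vector \<Rightarrow>\<^sub>L 'a) \<Rightarrow> ('a \<Rightarrow>\<^sub>L 'a) \<Rightarrow> real" where
  "F5 J A = (let M = specmax J A; m = specmin J A; a = a0 J A; d = delta J A in
     sqrt ((a^2 - d) / 2 + M * m / 2) + sqrt (((1 - a)^2 - d) / 2 + (1 - M) * (1 - m) / 2))"

definition B5 :: "('a::real_normed_vector \<Rightarrow>\<^sub>L 'a) \<Rightarrow> ('a \<Rightarrow>\<^sub>L 'a) \<Rightarrow> real" where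
  "B5 J A = (let M = specmax J A; m = specmin J A; a = a0 J A; d = delta J A in
     sqrt ((a^2 - d) / 2 + M * m / 2) - sqrt (((1 - a)^2 - d) / 2 + (1 - M) * (1 - m) / 2))"

end

theory Submission
  imports Defs "HOL-Analysis.Analysis"
begin


lemmas bsimp = blinfun.diff_left blinfun.scaleR_left blinfun.add_left blinfun.minus_left
  blinfun_apply_blinfun_compose blinfun.diff_right blinfun.scaleR_right blinfun.add_right
  blinfun.minus_right blinfun.zero_left blinfun.zero_right blinfun_apply_id_blinfun

lemma inv_lr:
  assumes "L o\<^sub>L P = id_blinfun" "P o\<^sub>L R = id_blinfun"
  shows "invertible_op P"
proof -
  have "L = L o\<^sub>L (P o\<^sub>L R)" using assms by (auto intro!: blinfun_eqI)
  also have "\<dots> = (L o\<^sub>L P) o\<^sub>L R" by (auto intro!: blinfun_eqI)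
  also have "\<dots> = R" using assms by (auto intro!: blinfun_eqI)
  finally show ?thesis unfolding invertible_op_def using assms by auto
qed

lemma inv_bb_surj:
  fixes P :: "'a::real_normed_vector \<Rightarrow>\<^sub>L 'a"
  assumes c: "c > 0" and bb: "\<And>x. c * norm x \<le> norm (P x)" and s: "surj (blinfun_apply P)"
  shows "invertible_op P"
proof -
  have inj: "inj (blinfun_apply P)"
  proof (rule injI)
    fix x y assume "P x = P y"
    then have "P (x - y) = 0" by (simp add: bsimp)
    then have "c * norm (x - y) \<le> 0" using bb[of "x-y"] by simp
    then show "x = y" using c by (simp add: mult_le_0_iff)
  qed
  define g where "g = inv (blinfun_apply P)"
  have Pg: "P (g x) = x" for x unfolding g_def using s by (simp add: surj_f_inv_f)
  have gP: "g (P x) = x" for x unfolding g_def using inj by simp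
  have bl: "bounded_linear g"
  proof (rule bounded_linear_intro[where K="1/c"])
    fix x y show "g (x + y) = g x + g y"
      by (metis Pg blinfun.add_right gP)
  next
    fix r x show "g (r *\<^sub>R x) = r *\<^sub>R g x"
      by (metis Pg blinfun.scaleR_right gP)
  next
    fix x have "c * norm (g x) \<le> norm x" using bb[of "g x"] Pg by simp
    then show "norm (g x) \<le> norm x * (1/c)" using c by (simp add: field_simps)
  qed
  show ?thesis
    by (rule inv_lr[where L="Blinfun g" and R="Blinfun g"])
       (auto intro!: blinfun_eqI simp: bounded_linear_Blinfun_apply[OF bl] Pg gP)
qed

lemma coercive_inv:
  fixes S :: "'a::{real_inner,complete_space} \<Rightarrow>\<^sub>L 'a"
  assumes c: "c > 0" and co: "\<And>x. c * (norm x)^2 \<le> inner x (S x)"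
    and nt: "\<exists>x::'a. x \<noteq> 0"
  shows "invertible_op S"
proof -
  define K where "K = norm S"
  have SK: "norm (S x) \<le> K * norm x" for x unfolding K_def by (rule norm_blinfun)
  have ix: "inner x (S x) \<le> K * (norm x)^2" for x
  proof -
    have "inner x (S x) \<le> norm x * norm (S x)" by (metis Cauchy_Schwarz_ineq2 abs_le_D1)
    also have "\<dots> \<le> norm x * (K * norm x)" by (simp add: SK mult_left_mono)
    finally show ?thesis by (simp add: power2_eq_square mult_ac)
  qed
  obtain x0 :: 'a where x0: "x0 \<noteq> 0" using nt by auto
  have "c * (norm x0)^2 \<le> K * (norm x0)^2" using co[of x0] ix[of x0] by linarith
  then have cK: "c \<le> K" using x0 by simp
  then have Kp: "K > 0" using c by simp
  define e where "e = c / K^2"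
  define q where "q = sqrt (1 - c^2 / K^2)"
  have ck2: "c^2 / K^2 \<le> 1" using cK c by (simp add: power_mono)
  have ck3: "c^2 / K^2 > 0" using c Kp by simp
  have q0: "0 \<le> q" and q1: "q < 1" unfolding q_def using ck2 ck3 by auto
  have contr: "norm (z - e *\<^sub>R S z) \<le> q * norm z" for z
  proof -
    have "(norm (z - e *\<^sub>R S z))^2 = (norm z)^2 - 2 * e * inner z (S z) + e^2 * (norm (S z))^2"
      by (simp only: power2_norm_eq_inner)
         (simp add: inner_diff_left inner_diff_right inner_commute algebra_simps power2_eq_square)
    also have "\<dots> \<le> (norm z)^2 - 2 * e * (c * (norm z)^2) + e^2 * (K * norm z)^2"
    proof -
      have "2 * e * (c * (norm z)^2) \<le> 2 * e * inner z (S z)"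
        using co[of z] c Kp unfolding e_def by (intro mult_left_mono) auto
      moreover have "e^2 * (norm (S z))^2 \<le> e^2 * (K * norm z)^2"
        by (intro mult_left_mono power_mono SK) auto
      ultimately show ?thesis by linarith
    qed
    also have "\<dots> = (q * norm z)^2"
      using Kp ck2 unfolding q_def e_def by (simp add: power_mult_distrib field_simps power2_eq_square)
    finally show ?thesis using q0 by (simp add: power2_le_iff_abs_le)
  qed
  have bb: "c * norm x \<le> norm (S x)" for x
  proof (cases "x = 0")
    case False
    have "c * (norm x)^2 \<le> norm x * norm (S x)"
      using co[of x] by (metis Cauchy_Schwarz_ineq2 abs_le_D1 order_trans)
    then show ?thesis using False by (simp add: power2_eq_square)
  qed simp
  have "surj (blinfun_apply S)"
  proof -
    have "\<exists>x. S x = y" for y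
    proof -
      define f where "f x = x - e *\<^sub>R (S x - y)" for x
      have "\<forall>x z. dist (f x) (f z) \<le> q * dist x z"
      proof (intro allI)
        fix x z
        have "f x - f z = (x - z) - e *\<^sub>R S (x - z)" unfolding f_def by (simp add: bsimp algebra_simps)
        then show "dist (f x) (f z) \<le> q * dist x z" using contr[of "x - z"] by (simp add: dist_norm)
      qed
      then obtain x where "f x = x" using banach_fix_type[OF q0 q1] by blast
      then have "e *\<^sub>R (S x - y) = 0" unfolding f_def by simp
      then show ?thesis using c Kp by (auto simp: e_def)
    qed
    then show ?thesis by (metis surjI)
  qed
  then show ?thesis using inv_bb_surj[OF c bb] by blast
qed

definition symm :: "('a::real_inner \<Rightarrow>\<^sub>L 'a) \<Rightarrow> bool" where
  "symm S \<longleftrightarrow> (\<forall>x y. inner (S x) y = inner x (S y))"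

definition winf :: "('a::real_inner \<Rightarrow>\<^sub>L 'a) \<Rightarrow> real" where
  "winf S = Inf ((\<lambda>x. inner x (S x)) ` {x. norm x = 1})"

definition rsp :: "('a::real_normed_vector \<Rightarrow>\<^sub>L 'a) \<Rightarrow> real set" where
  "rsp S = {t. \<not> invertible_op (S - t *\<^sub>R id_blinfun)}"

lemma quad_nonneg:
  fixes a b c :: real
  assumes "\<And>s. 0 \<le> a + 2 * s * b + s^2 * c" and c0: "c \<ge> 0"
  shows "b^2 \<le> a * c"
proof (cases "c = 0")
  case True
  show ?thesis
  proof (cases "b = 0")
    case False
    have "0 \<le> a + 2 * (-(a+1)/(2*b)) * b + (-(a+1)/(2*b))^2 * c" by (rule assms)
    then show ?thesis using True False by (simp add: field_simps)
  qed (use assms(1)[of 0] True in simp)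
next
  case False
  then have "c > 0" using c0 by simp
  have "0 \<le> a + 2 * (-b/c) * b + (-b/c)^2 * c" by (rule assms)
  then show ?thesis using \<open>c > 0\<close> by (simp add: field_simps power2_eq_square)
qed

lemma symm_CS:
  assumes sy: "symm T" and pos: "\<And>x. 0 \<le> inner x (T x)"
  shows "(inner (T x) y)^2 \<le> inner x (T x) * inner y (T y)"
proof (rule quad_nonneg)
  fix s :: real
  have "inner (x + s *\<^sub>R y) (T (x + s *\<^sub>R y)) = inner x (T x) + 2 * s * inner (T x) y + s^2 * inner y (T y)"
    using sy unfolding symm_def
    by (simp add: bsimp inner_add_left inner_add_right inner_commute[of y "T x"] power2_eq_square algebra_simps)
  then show "0 \<le> inner x (T x) + 2 * s * inner (T x) y + s^2 * inner y (T y)" using pos by metis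
qed (rule pos)

lemma winf_bdd:
  fixes S :: "'a::real_inner \<Rightarrow>\<^sub>L 'a"
  shows "bdd_below ((\<lambda>x. inner x (S x)) ` {x. norm x = 1})"
proof (rule bdd_belowI2[where m="- norm S"])
  fix x :: 'a assume "x \<in> {x. norm x = 1}"
  then have "\<bar>inner x (S x)\<bar> \<le> norm S"
    using Cauchy_Schwarz_ineq2[of x "S x"] norm_blinfun[of S x] by simp
  then show "- norm S \<le> inner x (S x)" by simp
qed

lemma winf_le: "norm x = 1 \<Longrightarrow> winf S \<le> inner x (S x)"
  unfolding winf_def by (rule cInf_lower[OF _ winf_bdd]) auto

lemma sph_ne: "\<exists>x::'a::real_normed_vector. x \<noteq> 0 \<Longrightarrow> {x::'a. norm x = 1} \<noteq> {}"
  by (metis (mono_tags, lifting) empty_iff mem_Collect_eq norm_sgn)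

lemma winf_ge:
  fixes S :: "'a::real_inner \<Rightarrow>\<^sub>L 'a"
  assumes "\<exists>x::'a. x \<noteq> 0" "\<And>x. norm x = 1 \<Longrightarrow> b \<le> inner x (S x)"
  shows "b \<le> winf S"
  unfolding winf_def using sph_ne[OF assms(1)] assms(2) by (intro cInf_greatest) auto

lemma winf_approx:
  fixes S :: "'a::real_inner \<Rightarrow>\<^sub>L 'a"
  assumes "\<exists>x::'a. x \<noteq> 0" "e > 0"
  shows "\<exists>x. norm x = 1 \<and> inner x (S x) < winf S + e"
proof -
  have h: "Inf ((\<lambda>x. inner x (S x)) ` {x. norm x = 1}) < winf S + e" using assms(2) by (simp add: winf_def)
  have "(\<lambda>x. inner x (S x)) ` {x. norm x = 1} \<noteq> {}" using sph_ne[OF assms(1)] by auto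
  from cInf_lessD[OF this h] show ?thesis by auto
qed

lemma winf_scaled:
  fixes S :: "'a::real_inner \<Rightarrow>\<^sub>L 'a"
  shows "winf S * (norm x)^2 \<le> inner x (S x)"
proof (cases "x = 0")
  case False
  let ?u = "(1/norm x) *\<^sub>R x"
  have "winf S \<le> inner ?u (S ?u)" by (rule winf_le) (use False in simp)
  also have "\<dots> = inner x (S x) / (norm x)^2" by (simp add: bsimp power2_eq_square)
  finally show ?thesis using False by (simp add: field_simps)
qed simp

lemma winf_rsp:
  fixes S :: "'a::real_inner \<Rightarrow>\<^sub>L 'a"
  assumes sy: "symm S" and nt: "\<exists>x::'a. x \<noteq> 0"
  shows "winf S \<in> rsp S"
proof -
  define w where "w = winf S"
  define T where "T = S - w *\<^sub>R id_blinfun"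
  have Tx: "T x = S x - w *\<^sub>R x" for x unfolding T_def by (simp add: bsimp)
  have syT: "symm T" using sy unfolding symm_def by (simp add: Tx inner_diff_left inner_diff_right inner_commute)
  have pos: "0 \<le> inner x (T x)" for x
    using winf_scaled[of S x] by (simp add: Tx inner_diff_right w_def power2_norm_eq_inner)
  have key: "(norm (T x))^2 \<le> norm T * inner x (T x)" for x
  proof (cases "T x = 0")
    case False
    have "(inner (T x) (T x))^2 \<le> inner x (T x) * inner (T x) (T (T x))" by (rule symm_CS[OF syT pos])
    also have "\<dots> \<le> inner x (T x) * (norm T * (norm (T x))^2)"
    proof (rule mult_left_mono[OF _ pos])
      have "inner (T x) (T (T x)) \<le> norm (T x) * norm (T (T x))" by (metis Cauchy_Schwarz_ineq2 abs_le_D1)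
      also have "\<dots> \<le> norm (T x) * (norm T * norm (T x))" by (simp add: mult_left_mono norm_blinfun)
      finally show "inner (T x) (T (T x)) \<le> norm T * (norm (T x))^2" by (simp add: power2_eq_square mult_ac)
    qed
    finally have "((norm (T x))^2)^2 \<le> (norm T * inner x (T x)) * (norm (T x))^2"
      by (simp add: power2_norm_eq_inner mult_ac)
    then show ?thesis using False by (simp add: power2_eq_square)
  qed (simp add: pos)
  show ?thesis
  proof (rule ccontr)
    assume "winf S \<notin> rsp S"
    then obtain R where R: "R o\<^sub>L T = id_blinfun" unfolding rsp_def invertible_op_def T_def w_def by auto
    define N where "N = (norm R)^2 * norm T"
    have N0: "N \<ge> 0" unfolding N_def by simp
    have lb: "1 \<le> N * inner x (T x)" if "norm x = 1" for x
    proof -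
      have "x = R (T x)" using R by (metis blinfun_apply_blinfun_compose blinfun_apply_id_blinfun)
      then have "1 \<le> norm R * norm (T x)" using that norm_blinfun[of R "T x"] by simp
      then have "1 \<le> (norm R * norm (T x))^2" by (simp add: one_le_power)
      also have "\<dots> = (norm R)^2 * (norm (T x))^2" by (simp add: power_mult_distrib)
      also have "\<dots> \<le> (norm R)^2 * (norm T * inner x (T x))" by (simp add: key mult_left_mono)
      finally show ?thesis by (simp add: N_def mult_ac)
    qed
    obtain x where x: "norm x = 1" "inner x (S x) < w + 1/(N+1)"
      using winf_approx[OF nt, of "1/(N+1)" S] N0 by (auto simp: w_def)
    have p: "inner x (T x) < 1/(N+1)" using x by (simp add: Tx inner_diff_right power2_norm_eq_inner[symmetric])
    have "N * inner x (T x) \<le> N * (1/(N+1))" using p N0 by (intro mult_left_mono) auto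
    also have "\<dots> < 1" using N0 by (simp add: field_simps)
    finally show False using lb[OF x(1)] by simp
  qed
qed

lemma below_winf:
  fixes S :: "'a::{real_inner,complete_space} \<Rightarrow>\<^sub>L 'a"
  assumes nt: "\<exists>x::'a. x \<noteq> 0" and t: "t < winf S"
  shows "t \<notin> rsp S"
proof -
  have "invertible_op (S - t *\<^sub>R id_blinfun)"
  proof (rule coercive_inv[OF _ _ nt])
    show "0 < winf S - t" using t by simp
    fix x show "(winf S - t) * (norm x)^2 \<le> inner x ((S - t *\<^sub>R id_blinfun) x)"
      using winf_scaled[of S x] by (simp add: bsimp inner_diff_right power2_norm_eq_inner algebra_simps)
  qed
  then show ?thesis unfolding rsp_def by simp
qed

lemma inv_uminus: "invertible_op (- P) \<longleftrightarrow> invertible_op P"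
proof -
  have "invertible_op P" if "invertible_op (- P)" for P :: "'b::real_normed_vector \<Rightarrow>\<^sub>L 'b"
  proof -
    from that obtain B where B: "B o\<^sub>L - P = id_blinfun" "- P o\<^sub>L B = id_blinfun" unfolding invertible_op_def by auto
    have a: "- B (P x) = x" "- P (B x) = x" for x
      using B by (metis blinfun_apply_blinfun_compose blinfun_apply_id_blinfun blinfun.minus_left blinfun.minus_right)+
    have "(- B) o\<^sub>L P = id_blinfun" "P o\<^sub>L (- B) = id_blinfun"
      by (auto intro!: blinfun_eqI simp: bsimp a)
    then show ?thesis unfolding invertible_op_def by auto
  qed
  from this[of P] this[of "-P"] show ?thesis by auto
qed

lemma rsp_uminus: "rsp (- S) = uminus ` rsp S"
proof -
  have e: "- S - t *\<^sub>R id_blinfun = - (S - (-t) *\<^sub>R id_blinfun)" for t by (simp add: algebra_simps)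
  have "t \<in> rsp (-S) \<longleftrightarrow> -t \<in> rsp S" for t by (simp only: rsp_def mem_Collect_eq e inv_uminus)
  then show ?thesis by (auto simp: image_iff) (metis minus_minus)
qed


definition wsup :: "('a::real_inner \<Rightarrow>\<^sub>L 'a) \<Rightarrow> real" where
  "wsup S = - winf (- S)"

lemma symm_uminus: "symm S \<Longrightarrow> symm (- S)"
  unfolding symm_def by (simp add: bsimp)

lemma wsup_ge: fixes S :: "'a::real_inner \<Rightarrow>\<^sub>L 'a" shows "norm x = 1 \<Longrightarrow> inner x (S x) \<le> wsup S"
  using winf_le[of x "-S"] by (simp add: wsup_def bsimp)

lemma wsup_le:
  fixes S :: "'a::real_inner \<Rightarrow>\<^sub>L 'a"
  assumes "\<exists>x::'a. x \<noteq> 0" "\<And>x. norm x = 1 \<Longrightarrow> inner x (S x) \<le> b"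
  shows "wsup S \<le> b"
  using winf_ge[OF assms(1), of "-b" "-S"] assms(2) by (simp add: wsup_def bsimp)

lemma wsup_scaled: fixes S :: "'a::real_inner \<Rightarrow>\<^sub>L 'a" shows "inner x (S x) \<le> wsup S * (norm x)^2"
  using winf_scaled[of "-S" x] by (simp add: wsup_def bsimp)

lemma wsup_rsp:
  fixes S :: "'a::real_inner \<Rightarrow>\<^sub>L 'a"
  assumes "symm S" "\<exists>x::'a. x \<noteq> 0"
  shows "wsup S \<in> rsp S"
  using winf_rsp[OF symm_uminus[OF assms(1)] assms(2)] by (auto simp: wsup_def rsp_uminus)

lemma above_wsup:
  fixes S :: "'a::{real_inner,complete_space} \<Rightarrow>\<^sub>L 'a"
  assumes nt: "\<exists>x::'a. x \<noteq> 0" and t: "t > wsup S"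
  shows "t \<notin> rsp S"
  using below_winf[OF nt, of "-t" "-S"] t by (auto simp: wsup_def rsp_uminus)

lemma rsp_props:
  fixes S :: "'a::{real_inner,complete_space} \<Rightarrow>\<^sub>L 'a"
  assumes "symm S" "\<exists>x::'a. x \<noteq> 0"
  shows "rsp S \<subseteq> {winf S..wsup S}" "winf S \<in> rsp S" "wsup S \<in> rsp S"
    "Inf (rsp S) = winf S" "Sup (rsp S) = wsup S"
proof -
  show 1: "rsp S \<subseteq> {winf S..wsup S}"
    using below_winf[OF assms(2)] above_wsup[OF assms(2)] by force
  show 2: "winf S \<in> rsp S" by (rule winf_rsp[OF assms])
  show 3: "wsup S \<in> rsp S" by (rule wsup_rsp[OF assms])
  show "Inf (rsp S) = winf S"
    using 1 2 by (intro cInf_eq_minimum) auto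
  show "Sup (rsp S) = wsup S"
    using 1 3 by (intro cSup_eq_maximum) auto
qed

lemma effect_symm:
  assumes "A \<in> effects J" shows "symm A"
proof -
  have "cinner J (A x) y = cinner J x (A y)" for x y using assms unfolding effects_def selfadjoint_def by auto
  then show ?thesis unfolding symm_def cinner_def by (metis complex.sel(1))
qed

lemma effect_form:
  assumes "A \<in> effects J" shows "0 \<le> inner x (A x)" "inner x (A x) \<le> inner x x"
  using assms unfolding effects_def by auto

lemma effect_w:
  fixes A :: "'a::real_inner \<Rightarrow>\<^sub>L 'a"
  assumes "A \<in> effects J" "\<exists>x::'a. x \<noteq> 0"
  shows "0 \<le> winf A" "wsup A \<le> 1" "winf A \<le> wsup A"
proof -
  show "0 \<le> winf A" using winf_ge[OF assms(2), of 0 A] effect_form[OF assms(1)] by auto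
  show "wsup A \<le> 1" using wsup_le[OF assms(2), of A 1] effect_form[OF assms(1)]
    by (metis norm_eq_sqrt_inner real_sqrt_eq_1_iff)
  obtain x::'a where "norm x = 1" using sph_ne[OF assms(2)] by auto
  then show "winf A \<le> wsup A" using winf_le wsup_ge by (metis order_trans)
qed

lemma rspectrum_rsp: "rspectrum J A = rsp A"
  unfolding rspectrum_def rsp_def spectrum_def cscal_def by simp

lemma spec_w:
  fixes A :: "'a::{real_inner,complete_space} \<Rightarrow>\<^sub>L 'a"
  assumes "A \<in> effects J" "\<exists>x::'a. x \<noteq> 0"
  shows "specmax J A = wsup A" "specmin J A = winf A"
  using rsp_props[OF effect_symm[OF assms(1)] assms(2)]
  by (auto simp: specmax_def specmin_def rspectrum_rsp)

lemma inv_compose: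
  assumes "invertible_op P" "invertible_op Q" shows "invertible_op (P o\<^sub>L Q)"
proof -
  obtain P' where P: "P' o\<^sub>L P = id_blinfun" "P o\<^sub>L P' = id_blinfun" using assms(1) unfolding invertible_op_def by auto
  obtain Q' where Q: "Q' o\<^sub>L Q = id_blinfun" "Q o\<^sub>L Q' = id_blinfun" using assms(2) unfolding invertible_op_def by auto
  have a: "P' (P x) = x" "P (P' x) = x" "Q' (Q x) = x" "Q (Q' x) = x" for x
    using P Q by (metis blinfun_apply_blinfun_compose blinfun_apply_id_blinfun)+
  show ?thesis
    by (rule inv_lr[where L="Q' o\<^sub>L P'" and R="Q' o\<^sub>L P'"]) (auto intro!: blinfun_eqI simp: a)
qed

lemma inv_sq:
  assumes "invertible_op (U o\<^sub>L U)" shows "invertible_op U"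
proof -
  obtain Q where Q: "Q o\<^sub>L (U o\<^sub>L U) = id_blinfun" "(U o\<^sub>L U) o\<^sub>L Q = id_blinfun" using assms unfolding invertible_op_def by auto
  have a: "Q (U (U x)) = x" "U (U (Q x)) = x" for x
    using Q by (metis blinfun_apply_blinfun_compose blinfun_apply_id_blinfun)+
  show ?thesis
    by (rule inv_lr[where L="Q o\<^sub>L U" and R="U o\<^sub>L Q"]) (auto intro!: blinfun_eqI simp: a)
qed

lemma sq_form:
  assumes "symm T" shows "inner x ((T o\<^sub>L T) x) = (norm (T x))^2"
  using assms unfolding symm_def by (simp add: power2_norm_eq_inner)

lemma sq_form':
  assumes "symm T" shows "inner x (T (T x)) = (norm (T x))^2"
  using sq_form[OF assms, of x] by simp

lemma symm_sq: "symm T \<Longrightarrow> symm (T o\<^sub>L T)"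
  unfolding symm_def by simp

lemma sq_factor:
  fixes A :: "'a::real_normed_vector \<Rightarrow>\<^sub>L 'a"
  shows "((A - l *\<^sub>R id_blinfun) o\<^sub>L (A - l *\<^sub>R id_blinfun)) - (s^2) *\<^sub>R id_blinfun
    = (A - (l + s) *\<^sub>R id_blinfun) o\<^sub>L (A - (l - s) *\<^sub>R id_blinfun)"
  by (rule blinfun_eqI) (simp add: bsimp algebra_simps power2_eq_square)

lemma sq_rsp:
  fixes A :: "'a::{real_inner,complete_space} \<Rightarrow>\<^sub>L 'a"
  assumes sy: "symm A" and nt: "\<exists>x::'a. x \<noteq> 0"
    and far: "\<And>\<mu>. \<mu> \<in> rsp A \<Longrightarrow> d \<le> \<bar>l - \<mu>\<bar>" and d: "d \<ge> 0"
  shows "d * norm x \<le> norm (A x - l *\<^sub>R x)"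
proof -
  define T where "T = A - l *\<^sub>R id_blinfun"
  have syT: "symm T" using sy unfolding symm_def T_def by (simp add: bsimp inner_diff_left inner_diff_right inner_commute)
  define w where "w = winf (T o\<^sub>L T)"
  have w0: "0 \<le> w" unfolding w_def by (rule winf_ge[OF nt]) (simp add: sq_form'[OF syT])
  define s where "s = sqrt w"
  have s0: "s \<ge> 0" and sw: "s^2 = w" using w0 by (auto simp: s_def)
  have "w \<in> rsp (T o\<^sub>L T)" unfolding w_def by (rule winf_rsp[OF symm_sq[OF syT] nt])
  then have ninv: "\<not> invertible_op ((A - (l + s) *\<^sub>R id_blinfun) o\<^sub>L (A - (l - s) *\<^sub>R id_blinfun))"
    unfolding rsp_def T_def using sq_factor[of A l s] sw by simp
  have "l + s \<in> rsp A \<or> l - s \<in> rsp A"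
    using ninv inv_compose unfolding rsp_def by blast
  then have "d \<le> s" using far s0 by force
  then have "d^2 \<le> w" using d sw by (metis power_mono)
  have "(d * norm x)^2 \<le> w * (norm x)^2" using \<open>d^2 \<le> w\<close> by (simp add: power_mult_distrib mult_right_mono)
  also have "\<dots> \<le> (norm (T x))^2" using winf_scaled[of "T o\<^sub>L T" x] sq_form[OF syT, of x] by (simp add: w_def)
  finally have "d * norm x \<le> norm (T x)" using d by (simp add: power2_le_iff_abs_le)
  then show ?thesis by (simp add: T_def bsimp)
qed

lemma rsp_close:
  fixes A B :: "'a::{real_inner,complete_space} \<Rightarrow>\<^sub>L 'a"
  assumes syA: "symm A" and syB: "symm B" and nt: "\<exists>x::'a. x \<noteq> 0"
    and l: "l \<in> rsp B" and d: "norm (A - B) < d"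
  shows "\<exists>\<mu>\<in>rsp A. \<bar>l - \<mu>\<bar> < d"
proof (rule ccontr)
  assume "\<not> ?thesis"
  then have far: "\<And>\<mu>. \<mu> \<in> rsp A \<Longrightarrow> d \<le> \<bar>l - \<mu>\<bar>" by force
  have d0: "d \<ge> 0" using d norm_ge_zero[of "A - B"] by linarith
  define U where "U = B - l *\<^sub>R id_blinfun"
  define c where "c = d - norm (A - B)"
  have c0: "c > 0" using d by (simp add: c_def)
  have bb: "c * norm x \<le> norm (U x)" for x
  proof -
    have "d * norm x \<le> norm (A x - l *\<^sub>R x)" by (rule sq_rsp[OF syA nt far d0])
    also have "A x - l *\<^sub>R x = U x + (A - B) x" by (simp add: U_def bsimp)
    also have "norm (U x + (A - B) x) \<le> norm (U x) + norm (A - B) * norm x"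
      by (metis add_left_mono norm_blinfun norm_triangle_ineq order_trans)
    finally show ?thesis by (simp add: c_def algebra_simps)
  qed
  have syU: "symm U" using syB unfolding symm_def U_def by (simp add: bsimp inner_diff_left inner_diff_right inner_commute)
  have "invertible_op (U o\<^sub>L U)"
  proof (rule coercive_inv[OF _ _ nt])
    show "0 < c^2" using c0 by simp
    fix x
    have "(c * norm x)^2 \<le> (norm (U x))^2" using bb[of x] c0 by (simp add: power_mono)
    then show "c^2 * (norm x)^2 \<le> inner x ((U o\<^sub>L U) x)" by (simp add: sq_form'[OF syU] power_mult_distrib)
  qed
  then have "invertible_op U" by (rule inv_sq)
  then show False using l unfolding rsp_def U_def by simp
qed

lemma zero_form:
  fixes Q :: "'a::real_inner \<Rightarrow>\<^sub>L 'a"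
  assumes sy: "symm Q" and z: "\<And>x. inner x (Q x) = 0"
  shows "Q = 0"
proof (rule blinfun_eqI)
  fix x
  have "inner (x + Q x) (Q (x + Q x)) = inner x (Q x) + 2 * inner (Q x) (Q x) + inner (Q x) (Q (Q x))"
    using sy unfolding symm_def by (simp add: bsimp inner_add_left inner_add_right inner_commute)
  then have "inner (Q x) (Q x) = 0" using z[of x] z[of "x + Q x"] z[of "Q x"] by simp
  then show "Q x = (0::'a \<Rightarrow>\<^sub>L 'a) x" by simp
qed

lemma form_const:
  fixes A :: "'a::real_inner \<Rightarrow>\<^sub>L 'a"
  assumes sy: "symm A" and c: "\<And>x. inner x (A x) = l * inner x x"
  shows "A = l *\<^sub>R id_blinfun"
proof -
  have "A - l *\<^sub>R id_blinfun = 0"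
    by (rule zero_form) (use sy c in \<open>auto simp: symm_def bsimp inner_diff_left inner_diff_right inner_commute\<close>)
  then show ?thesis by simp
qed

lemma w_eq_const:
  fixes A :: "'a::real_inner \<Rightarrow>\<^sub>L 'a"
  assumes sy: "symm A" and eq: "winf A = wsup A"
  shows "A = winf A *\<^sub>R id_blinfun"
proof (rule form_const[OF sy])
  fix x
  show "inner x (A x) = winf A * inner x x"
    using winf_scaled[of A x] wsup_scaled[of x A] eq by (simp add: power2_norm_eq_inner)
qed

lemma const_w:
  fixes l :: real
  assumes nt: "\<exists>x::'a. x \<noteq> 0"
  shows "winf (l *\<^sub>R (id_blinfun :: 'a::real_inner \<Rightarrow>\<^sub>L 'a)) = l"
    and "wsup (l *\<^sub>R (id_blinfun :: 'a::real_inner \<Rightarrow>\<^sub>L 'a)) = l"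
proof -
  obtain x :: 'a where x: "norm x = 1" using sph_ne[OF nt] by auto
  have f: "inner y ((l *\<^sub>R (id_blinfun :: 'a \<Rightarrow>\<^sub>L 'a)) y) = l" if "norm y = 1" for y
    using that by (simp add: bsimp power2_norm_eq_inner[symmetric])
  show "winf (l *\<^sub>R (id_blinfun :: 'a::real_inner \<Rightarrow>\<^sub>L 'a)) = l"
    using winf_ge[OF nt, of l] winf_le[OF x] f x by (metis order_antisym order_refl)
  show "wsup (l *\<^sub>R (id_blinfun :: 'a::real_inner \<Rightarrow>\<^sub>L 'a)) = l"
    using wsup_le[OF nt, of _ l] wsup_ge[OF x] f x by (metis order_antisym order_refl)
qed

lemma proj_spec_aux:
  fixes A :: "'a::{real_inner,complete_space} \<Rightarrow>\<^sub>L 'a"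
  assumes sub: "rsp A \<subseteq> {0,1}"
    and t: "t \<in> rsp ((A - (1/2) *\<^sub>R id_blinfun) o\<^sub>L (A - (1/2) *\<^sub>R id_blinfun))" and t0: "t \<ge> 0"
  shows "t = 1/4"
proof -
  define s where "s = sqrt t"
  have s0: "s \<ge> 0" and st: "s^2 = t" using t0 by (auto simp: s_def)
  have "\<not> invertible_op ((A - (1/2 + s) *\<^sub>R id_blinfun) o\<^sub>L (A - (1/2 - s) *\<^sub>R id_blinfun))"
    using t sq_factor[of A "1/2" s] st unfolding rsp_def by simp
  then have "1/2 + s \<in> rsp A \<or> 1/2 - s \<in> rsp A" using inv_compose unfolding rsp_def by blast
  then have "s = 1/2" using sub s0 by auto
  then have "t = (1/2)^2" using st by metis
  then show ?thesis by (simp add: power2_eq_square)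
qed

lemma proj_from_spec:
  fixes A :: "'a::{real_inner,complete_space} \<Rightarrow>\<^sub>L 'a"
  assumes sy: "symm A" and nt: "\<exists>x::'a. x \<noteq> 0" and sub: "rsp A \<subseteq> {0,1}"
  shows "A o\<^sub>L A = A"
proof -
  define T where "T = A - (1/2) *\<^sub>R id_blinfun"
  have syT: "symm T" using sy unfolding symm_def T_def by (simp add: bsimp inner_diff_left inner_diff_right inner_commute)
  have syS: "symm (T o\<^sub>L T)" by (rule symm_sq[OF syT])
  have w0: "0 \<le> winf (T o\<^sub>L T)" by (rule winf_ge[OF nt]) (simp add: sq_form'[OF syT])
  have wi: "winf (T o\<^sub>L T) = 1/4"
    using proj_spec_aux[OF sub _ w0] winf_rsp[OF syS nt] by (simp add: T_def)
  obtain x :: 'a where x: "norm x = 1" using sph_ne[OF nt] by auto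
  have "winf (T o\<^sub>L T) \<le> wsup (T o\<^sub>L T)" using winf_le[OF x] wsup_ge[OF x] by (metis order_trans)
  then have ws: "wsup (T o\<^sub>L T) = 1/4"
    using proj_spec_aux[OF sub _ ] wsup_rsp[OF syS nt] wi by (simp add: T_def)
  have "T o\<^sub>L T = winf (T o\<^sub>L T) *\<^sub>R id_blinfun" by (rule w_eq_const[OF syS]) (simp add: wi ws)
  then have "(T o\<^sub>L T) x = (1/4) *\<^sub>R x" for x by (simp add: wi blinfun.scaleR_left)
  then have "A (A x) - A x = 0" for x by (simp add: T_def bsimp algebra_simps) (simp add: scaleR_add_left[symmetric])
  then show ?thesis by (auto intro!: blinfun_eqI)
qed

lemma proj_spec:
  fixes A :: "'a::real_normed_vector \<Rightarrow>\<^sub>L 'a"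
  assumes P: "A o\<^sub>L A = A" and n0: "A \<noteq> 0" and n1: "A \<noteq> id_blinfun"
  shows "rsp A = {0,1}"
proof -
  have AA: "A (A x) = A x" for x using P by (metis blinfun_apply_blinfun_compose)
  have "t \<notin> rsp A" if "t \<noteq> 0" "t \<noteq> 1" for t
  proof -
    have e: "1 + t/(1-t) = 1/(1-t)" using that by (simp add: field_simps)
    have sc: "(1/(1-t)) *\<^sub>R v = v + (t/(1-t)) *\<^sub>R v" for v :: 'a by (metis e scaleR_add_left scaleR_one)
    define R where "R = (1/(1-t)) *\<^sub>R A + (-1/t) *\<^sub>R (id_blinfun - A)"
    have "R o\<^sub>L (A - t *\<^sub>R id_blinfun) = id_blinfun" "(A - t *\<^sub>R id_blinfun) o\<^sub>L R = id_blinfun"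
      using that by (auto intro!: blinfun_eqI simp: R_def bsimp AA field_simps sc)
        (simp_all add: scaleR_add_left[symmetric] field_simps)
    then show ?thesis unfolding rsp_def invertible_op_def by auto
  qed
  moreover have "0 \<in> rsp A"
  proof -
    have "\<not> invertible_op A"
    proof
      assume "invertible_op A"
      then obtain R where R: "R o\<^sub>L A = id_blinfun" unfolding invertible_op_def by auto
      have "A x = x" for x using AA[of x] R by (metis blinfun_apply_blinfun_compose blinfun_apply_id_blinfun)
      then show False using n1 by (auto intro!: blinfun_eqI)
    qed
    then show ?thesis unfolding rsp_def by simp
  qed
  moreover have "1 \<in> rsp A"
  proof -
    have "\<not> invertible_op (A - id_blinfun)"
    proof
      assume "invertible_op (A - id_blinfun)"
      then obtain R where R: "R o\<^sub>L (A - id_blinfun) = id_blinfun" unfolding invertible_op_def by auto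
      have "A x = 0" for x
      proof -
        have "(A - id_blinfun) (A x) = 0" by (simp add: bsimp AA)
        then show ?thesis using R by (metis blinfun_apply_blinfun_compose blinfun_apply_id_blinfun blinfun.zero_right)
      qed
      then show False using n0 by (auto intro!: blinfun_eqI)
    qed
    then show ?thesis unfolding rsp_def by simp
  qed
  ultimately show ?thesis by blast
qed


lemma wsup_lip:
  fixes A B :: "'a::real_inner \<Rightarrow>\<^sub>L 'a"
  assumes nt: "\<exists>x::'a. x \<noteq> 0"
  shows "wsup A \<le> wsup B + norm (A - B)"
proof (rule wsup_le[OF nt])
  fix x :: 'a assume x: "norm x = 1"
  have "inner x (A x) = inner x (B x) + inner x ((A - B) x)" by (simp add: bsimp inner_diff_right)
  also have "inner x ((A - B) x) \<le> norm (A - B)"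
    using Cauchy_Schwarz_ineq2[of x "(A - B) x"] norm_blinfun[of "A - B" x] x by simp
  finally show "inner x (A x) \<le> wsup B + norm (A - B)" using wsup_ge[OF x, of B] by linarith
qed

lemma wsup_lip2:
  fixes A B :: "'a::real_inner \<Rightarrow>\<^sub>L 'a"
  assumes nt: "\<exists>x::'a. x \<noteq> 0"
  shows "\<bar>wsup A - wsup B\<bar> \<le> norm (A - B)"
  using wsup_lip[OF nt, of A B] wsup_lip[OF nt, of B A] by (simp add: norm_minus_commute)

lemma winf_lip2:
  fixes A B :: "'a::real_inner \<Rightarrow>\<^sub>L 'a"
  assumes nt: "\<exists>x::'a. x \<noteq> 0"
  shows "\<bar>winf A - winf B\<bar> \<le> norm (A - B)"
proof -
  have "winf A = - wsup (- A)" "winf B = - wsup (- B)" by (simp_all add: wsup_def)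
  moreover have "norm (- A - - B) = norm (A - B)" by (metis minus_diff_minus norm_minus_cancel)
  ultimately show ?thesis using wsup_lip2[OF nt, of "-A" "-B"] by simp
qed

definition dl :: "('a::real_inner \<Rightarrow>\<^sub>L 'a) \<Rightarrow> real" where
  "dl A = Inf ((\<lambda>t. (t - (wsup A + winf A)/2)^2) ` rsp A)"

lemma dl_lower: "t \<in> rsp A \<Longrightarrow> dl A \<le> (t - (wsup A + winf A)/2)^2"
  unfolding dl_def by (rule cInf_lower) (auto intro!: bdd_belowI2[where m=0])

lemma dl_ge: "rsp A \<noteq> {} \<Longrightarrow> (\<And>t. t \<in> rsp A \<Longrightarrow> b \<le> (t - (wsup A + winf A)/2)^2) \<Longrightarrow> b \<le> dl A"
  unfolding dl_def by (rule cInf_greatest) auto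

lemma sq_diff_bound:
  fixes u v :: real
  assumes "\<bar>u\<bar> \<le> 1" "\<bar>v\<bar> \<le> 1"
  shows "u^2 \<le> v^2 + 2 * \<bar>u - v\<bar>"
proof -
  have "u^2 - v^2 = (u - v) * (u + v)" by (simp add: power2_eq_square algebra_simps)
  also have "\<dots> \<le> \<bar>u - v\<bar> * \<bar>u + v\<bar>" by (metis abs_ge_self abs_mult)
  also have "\<dots> \<le> \<bar>u - v\<bar> * 2" using assms by (intro mult_left_mono) auto
  finally show ?thesis by simp
qed

lemma effect_facts:
  fixes A :: "'a::{real_inner,complete_space} \<Rightarrow>\<^sub>L 'a"
  assumes "A \<in> effects J" "\<exists>x::'a. x \<noteq> 0"
  shows "symm A" "0 \<le> winf A" "winf A \<le> wsup A" "wsup A \<le> 1" "rsp A \<subseteq> {winf A..wsup A}"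
    "winf A \<in> rsp A" "wsup A \<in> rsp A"
  using effect_symm[OF assms(1)] effect_w[OF assms] rsp_props[OF effect_symm[OF assms(1)] assms(2)] by auto

lemma dl_lip:
  fixes A B :: "'a::{real_inner,complete_space} \<Rightarrow>\<^sub>L 'a"
  assumes A: "A \<in> effects J" and B: "B \<in> effects J" and nt: "\<exists>x::'a. x \<noteq> 0"
  shows "dl A \<le> dl B + 4 * norm (A - B)"
proof (rule field_le_epsilon)
  fix e :: real assume e: "e > 0"
  let ?n = "norm (A - B)"
  define a where "a = (wsup A + winf A)/2"
  define b where "b = (wsup B + winf B)/2"
  note fA = effect_facts[OF A nt] and fB = effect_facts[OF B nt]
  have h1: "wsup A - wsup B \<le> ?n" "wsup B - wsup A \<le> ?n" using wsup_lip2[OF nt, of A B] by (auto simp: abs_le_iff)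
  have h2: "winf A - winf B \<le> ?n" "winf B - winf A \<le> ?n" using winf_lip2[OF nt, of A B] by (auto simp: abs_le_iff)
  have "a - b = ((wsup A - wsup B) + (winf A - winf B)) / 2" "b - a = ((wsup B - wsup A) + (winf B - winf A)) / 2"
    unfolding a_def b_def by (simp_all add: field_simps)
  then have "a - b \<le> ?n" "b - a \<le> ?n" using h1 h2 by simp_all
  then have ab: "\<bar>a - b\<bar> \<le> ?n" by linarith
  have "dl A - 2 * (2 * ?n + e/2) \<le> dl B"
  proof (rule dl_ge)
    show "rsp B \<noteq> {}" using fB by auto
    fix t assume t: "t \<in> rsp B"
    obtain \<mu> where mu: "\<mu> \<in> rsp A" "\<bar>t - \<mu>\<bar> < ?n + e/2"
      using rsp_close[OF fA(1) fB(1) nt t, of "?n + e/2"] e by auto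
    have "dl A \<le> (\<mu> - a)^2" using dl_lower[OF mu(1)] by (simp add: a_def)
    also have "\<dots> \<le> (t - b)^2 + 2 * \<bar>(\<mu> - a) - (t - b)\<bar>"
    proof (rule sq_diff_bound)
      have "winf A \<le> \<mu>" "\<mu> \<le> wsup A" using mu(1) fA(5) by auto
      moreover have "winf A \<le> a" "a \<le> wsup A" unfolding a_def using fA(3) by simp_all
      ultimately show "\<bar>\<mu> - a\<bar> \<le> 1" using fA(2-4) by (simp add: abs_le_iff)
      have "winf B \<le> t" "t \<le> wsup B" using t fB(5) by auto
      moreover have "winf B \<le> b" "b \<le> wsup B" unfolding b_def using fB(3) by simp_all
      ultimately show "\<bar>t - b\<bar> \<le> 1" using fB(2-4) by (simp add: abs_le_iff)
    qed
    also have "\<dots> \<le> (t - b)^2 + 2 * (2 * ?n + e/2)" using mu(2) ab by (smt (verit))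
    finally show "dl A - 2 * (2 * ?n + e/2) \<le> (t - (wsup B + winf B)/2)^2" by (simp add: b_def)
  qed
  then show "dl A \<le> dl B + 4 * ?n + e" by simp
qed

lemma lip_cont:
  fixes f :: "('a::real_normed_vector \<Rightarrow>\<^sub>L 'a) \<Rightarrow> real"
  assumes "\<And>A B. A \<in> S \<Longrightarrow> B \<in> S \<Longrightarrow> \<bar>f A - f B\<bar> \<le> K * norm (A - B)" "K \<ge> 0"
  shows "continuous_on S f"
  by (rule lipschitz_on_continuous_on[where L=K], rule lipschitz_onI)
     (use assms in \<open>auto simp: dist_norm\<close>)

lemma cont_w:
  fixes S :: "('a::{real_inner,complete_space} \<Rightarrow>\<^sub>L 'a) set"
  assumes nt: "\<exists>x::'a. x \<noteq> 0" and S: "S \<subseteq> effects J"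
  shows "continuous_on S wsup" "continuous_on S winf" "continuous_on S dl"
proof -
  show "continuous_on S wsup" by (rule lip_cont[where K=1]) (use wsup_lip2[OF nt] in auto)
  show "continuous_on S winf" by (rule lip_cont[where K=1]) (use winf_lip2[OF nt] in auto)
  show "continuous_on S dl"
  proof (rule lip_cont[where K=4])
    fix A B assume "A \<in> S" "B \<in> S"
    then have AB: "A \<in> effects J" "B \<in> effects J" using S by auto
    have "dl A \<le> dl B + 4 * norm (A - B)" by (rule dl_lip[OF AB nt])
    moreover have "dl B \<le> dl A + 4 * norm (B - A)" by (rule dl_lip[OF AB(2,1) nt])
    moreover have "norm (B - A) = norm (A - B)" by (rule norm_minus_commute)
    ultimately show "\<bar>dl A - dl B\<bar> \<le> 4 * norm (A - B)" by linarith
  qed simp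
qed


definition Fr :: "real \<Rightarrow> real \<Rightarrow> real \<Rightarrow> real" where
  "Fr M m d = (let a = (M + m)/2 in sqrt ((a^2 - d)/2 + M*m/2) + sqrt (((1-a)^2 - d)/2 + (1-M)*(1-m)/2))"
definition Br :: "real \<Rightarrow> real \<Rightarrow> real \<Rightarrow> real" where
  "Br M m d = (let a = (M + m)/2 in sqrt ((a^2 - d)/2 + M*m/2) - sqrt (((1-a)^2 - d)/2 + (1-M)*(1-m)/2))"

lemma hl1: fixes P x y d :: real shows "P - x = (y - d)/2 \<Longrightarrow> 0 \<le> x \<Longrightarrow> d \<le> y \<Longrightarrow> 0 \<le> P" by (simp add: field_simps)
lemma hl2: fixes P x y d :: real shows "x - P = (y + d)/2 \<Longrightarrow> 0 \<le> y \<Longrightarrow> 0 \<le> d \<Longrightarrow> P \<le> x" by (simp add: field_simps)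

locale H =
  fixes M m d :: real
  assumes m0: "0 \<le> m" and mM: "m \<le> M" and M1: "M \<le> 1" and d0: "0 \<le> d" and dM: "d \<le> (M - (M+m)/2)^2"
begin

definition "a = (M+m)/2"
definition "p = (a^2 - d)/2 + M*m/2"
definition "q = ((1-a)^2 - d)/2 + (1-M)*(1-m)/2"

lemma Fr_pq: "Fr M m d = sqrt p + sqrt q" unfolding Fr_def p_def q_def a_def Let_def ..
lemma Br_pq: "Br M m d = sqrt p - sqrt q" unfolding Br_def p_def q_def a_def Let_def ..

lemma dM': "d \<le> (M - m)^2/4" using dM by (simp add: power2_eq_square field_simps)

lemma p0: "0 \<le> p"
proof -
  have "p - M*m = ((M-m)^2/4 - d)/2" unfolding p_def a_def by (simp add: power2_eq_square field_simps)
  moreover have "0 \<le> M*m" using m0 mM by simp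
  ultimately show ?thesis using dM' by (rule hl1)
qed

lemma q0: "0 \<le> q"
proof -
  have "q - (1-M)*(1-m) = ((M-m)^2/4 - d)/2" unfolding q_def a_def by (simp add: power2_eq_square field_simps)
  moreover have "0 \<le> (1-M)*(1-m)" using M1 mM by simp
  ultimately show ?thesis using dM' by (rule hl1)
qed

lemma a0: "0 \<le> a" "a \<le> 1" unfolding a_def using m0 mM M1 by auto

lemma pa: "p \<le> a^2"
proof -
  have "a^2 - p = ((M-m)^2/4 + d)/2" unfolding p_def a_def by (simp add: power2_eq_square field_simps)
  then show ?thesis by (rule hl2) (simp_all add: d0)
qed

lemma qa: "q \<le> (1-a)^2"
proof -
  have "(1-a)^2 - q = ((M-m)^2/4 + d)/2" unfolding q_def a_def by (simp add: power2_eq_square field_simps)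
  then show ?thesis by (rule hl2) (simp_all add: d0)
qed

lemma sp: "sqrt p \<le> a" using pa a0 by (metis real_sqrt_abs real_sqrt_le_mono abs_of_nonneg)
lemma sq: "sqrt q \<le> 1 - a" using qa a0 by (metis real_sqrt_abs real_sqrt_le_mono abs_of_nonneg diff_ge_0_iff_ge)

lemma pq: "p - q = 2*a - 1" unfolding p_def q_def a_def by (simp add: power2_eq_square field_simps)

lemma Fr_bounds: "0 \<le> Fr M m d" "Fr M m d \<le> 1"
  using sp sq real_sqrt_ge_zero[OF p0] real_sqrt_ge_zero[OF q0] by (auto simp: Fr_pq)

lemma Fr_one: "Fr M m d = 1 \<longleftrightarrow> M = m"
proof
  assume "Fr M m d = 1"
  then have "sqrt p = a" using sp sq Fr_pq by linarith
  then have "p = a^2" using p0 by (metis real_sqrt_pow2)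
  then have "(M-m)^2/4 + d = 0" unfolding p_def a_def by (simp add: power2_eq_square field_simps)
  moreover have "0 \<le> (M-m)^2" by simp
  ultimately have "(M-m)^2 = 0" using d0 by linarith
  then show "M = m" by simp
next
  assume "M = m"
  then have "d = 0" using d0 dM by simp
  then have "p = a^2" "q = (1-a)^2" using \<open>M = m\<close> unfolding p_def q_def a_def by (simp_all add: power2_eq_square)
  then show "Fr M m d = 1" using a0 by (simp add: Fr_pq)
qed

lemma Fr_zero: "Fr M m d = 0 \<longleftrightarrow> M = 1 \<and> m = 0 \<and> d = 1/4"
proof
  assume "Fr M m d = 0"
  then have "sqrt p = 0" "sqrt q = 0" using real_sqrt_ge_zero[OF p0] real_sqrt_ge_zero[OF q0] Fr_pq by linarith+
  then have pz: "p = 0" and qz: "q = 0" by auto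
  then have "a = 1/2" using pq by simp
  then have Mm: "M + m = 1" unfolding a_def by simp
  have "d = 1/4 + M*m" using pz \<open>a = 1/2\<close> unfolding p_def by (simp add: power2_eq_square field_simps)
  moreover have "(M - m)^2/4 = 1/4 - M*m"
  proof -
    have "(M - m)^2 = (M + m)^2 - 4*(M*m)" by (simp add: power2_eq_square algebra_simps)
    then show ?thesis using Mm by simp
  qed
  then have "d \<le> 1/4 - M*m" using dM' by simp
  moreover have "0 \<le> M*m" using m0 mM by simp
  ultimately have "M*m = 0" "d = 1/4" by auto
  then show "M = 1 \<and> m = 0 \<and> d = 1/4" using Mm mM by auto
next
  assume "M = 1 \<and> m = 0 \<and> d = 1/4"
  then have "p = 0" "q = 0" unfolding p_def q_def a_def by (simp_all add: power2_eq_square)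
  then show "Fr M m d = 0" by (simp add: Fr_pq)
qed

lemma Br_bounds: "-1 \<le> Br M m d" "Br M m d \<le> 1"
  using sp sq a0 real_sqrt_ge_zero[OF p0] real_sqrt_ge_zero[OF q0] unfolding Br_pq by argo+

lemma Br_zero: "Br M m d = 0 \<longleftrightarrow> (M + m)/2 = 1/2"
proof -
  have "Br M m d = 0 \<longleftrightarrow> p = q" using p0 q0 by (simp add: Br_pq)
  also have "\<dots> \<longleftrightarrow> a = 1/2" using pq by auto
  finally show ?thesis by (simp add: a_def)
qed

lemma Br_one: "Br M m d = 1 \<longleftrightarrow> M = 1 \<and> m = 1"
proof
  assume "Br M m d = 1"
  then have "sqrt p \<ge> 1" using Br_pq real_sqrt_ge_zero[OF q0] by linarith
  then have "a = 1" using sp a0 by linarith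
  then show "M = 1 \<and> m = 1" unfolding a_def using mM M1 by simp
next
  assume H: "M = 1 \<and> m = 1"
  then have "d = 0" using d0 dM by simp
  then have "p = 1" "q = 0" using H unfolding p_def q_def a_def by simp_all
  then show "Br M m d = 1" by (simp add: Br_pq)
qed

lemma Br_mone: "Br M m d = -1 \<longleftrightarrow> M = 0 \<and> m = 0"
proof
  assume "Br M m d = -1"
  then have "sqrt q \<ge> 1" using Br_pq real_sqrt_ge_zero[OF p0] by linarith
  then have "a = 0" using sq a0 by linarith
  then show "M = 0 \<and> m = 0" unfolding a_def using mM m0 by simp
next
  assume H: "M = 0 \<and> m = 0"
  then have "d = 0" using d0 dM by simp
  then have "p = 0" "q = 1" using H unfolding p_def q_def a_def by simp_all
  then show "Br M m d = -1" by (simp add: Br_pq)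
qed

end

lemma Fr_compl: "Fr (1 - m) (1 - M) d = Fr M m d"
proof -
  have "(1 - m + (1 - M))/2 = 1 - (M+m)/2" by (simp add: field_simps)
  then show ?thesis unfolding Fr_def Let_def by (simp only: diff_diff_eq2 mult.commute add.commute) simp
qed

lemma Br_compl: "Br (1 - m) (1 - M) d = - Br M m d"
proof -
  have "(1 - m + (1 - M))/2 = 1 - (M+m)/2" by (simp add: field_simps)
  then show ?thesis unfolding Br_def Let_def by (simp only: diff_diff_eq2 mult.commute add.commute) simp
qed


lemma F5_gen: "F5 J X = Fr (Sup (rsp X)) (Inf (rsp X)) (Inf ((\<lambda>t. (t - (Sup (rsp X) + Inf (rsp X))/2)^2) ` rsp X))"
  unfolding F5_def Fr_def a0_def delta_def specmax_def specmin_def rspectrum_rsp Let_def ..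

lemma B5_gen: "B5 J X = Br (Sup (rsp X)) (Inf (rsp X)) (Inf ((\<lambda>t. (t - (Sup (rsp X) + Inf (rsp X))/2)^2) ` rsp X))"
  unfolding B5_def Br_def a0_def delta_def specmax_def specmin_def rspectrum_rsp Let_def ..

context
  fixes J :: "'a::{real_inner,complete_space} \<Rightarrow>\<^sub>L 'a"
  assumes nt: "\<exists>x::'a. x \<noteq> 0"
begin

lemma F5_eff: "A \<in> effects J \<Longrightarrow> F5 J A = Fr (wsup A) (winf A) (dl A)"
  using rsp_props[OF effect_symm nt] by (simp add: F5_gen dl_def)

lemma B5_eff: "A \<in> effects J \<Longrightarrow> B5 J A = Br (wsup A) (winf A) (dl A)"
  using rsp_props[OF effect_symm nt] by (simp add: B5_gen dl_def)

lemma H_eff: assumes "A \<in> effects J" shows "H (wsup A) (winf A) (dl A)"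
proof -
  note f = effect_facts[OF assms nt]
  have "0 \<le> dl A" by (rule dl_ge) (use f in auto)
  moreover have "dl A \<le> (wsup A - (wsup A + winf A)/2)^2" by (rule dl_lower[OF f(7)])
  ultimately show ?thesis using f unfolding H_def by auto
qed

lemma spec_eff: "A \<in> effects J \<Longrightarrow> specmax J A = wsup A \<and> specmin J A = winf A"
  using spec_w[OF _ nt] by blast

lemma rsp_compl: "rsp (id_blinfun - A) = (\<lambda>t. 1 - t) ` rsp A"
proof -
  have e: "(id_blinfun - A) - t *\<^sub>R id_blinfun = - (A - (1 - t) *\<^sub>R id_blinfun)" for t
    by (rule blinfun_eqI) (simp add: bsimp algebra_simps)
  have "t \<in> rsp (id_blinfun - A) \<longleftrightarrow> 1 - t \<in> rsp A" for t
    by (simp only: rsp_def mem_Collect_eq e inv_uminus)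
  then show ?thesis
  proof (intro set_eqI iffI)
    fix t assume h: "\<And>t. (t \<in> rsp (id_blinfun - A)) = (1 - t \<in> rsp A)" and t: "t \<in> rsp (id_blinfun - A)"
    then have "1 - t \<in> rsp A" by simp
    moreover have "t = 1 - (1 - t)" by simp
    ultimately show "t \<in> (\<lambda>t. 1 - t) ` rsp A" by blast
  next
    fix t assume h: "\<And>t. (t \<in> rsp (id_blinfun - A)) = (1 - t \<in> rsp A)" and t: "t \<in> (\<lambda>t. 1 - t) ` rsp A"
    then show "t \<in> rsp (id_blinfun - A)" by auto
  qed
qed

lemma compl_quant:
  assumes A: "A \<in> effects J"
  shows "Sup (rsp (id_blinfun - A)) = 1 - winf A" "Inf (rsp (id_blinfun - A)) = 1 - wsup A"
    "Inf ((\<lambda>t. (t - (Sup (rsp (id_blinfun - A)) + Inf (rsp (id_blinfun - A)))/2)^2) ` rsp (id_blinfun - A)) = dl A"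
proof -
  note f = effect_facts[OF A nt]
  show s: "Sup (rsp (id_blinfun - A)) = 1 - winf A"
    unfolding rsp_compl using f(5,6) by (intro cSup_eq_maximum) auto
  show i: "Inf (rsp (id_blinfun - A)) = 1 - wsup A"
    unfolding rsp_compl using f(5,7) by (intro cInf_eq_minimum) auto
  have "(\<lambda>t. (t - ((1 - winf A) + (1 - wsup A))/2)^2) ` ((\<lambda>t. 1 - t) ` rsp A)
      = (\<lambda>t. (t - (wsup A + winf A)/2)^2) ` rsp A"
    unfolding image_image
  proof (rule image_cong[OF refl])
    fix t
    have h: "1 - t - ((1 - winf A) + (1 - wsup A))/2 = - (t - (wsup A + winf A)/2)" by (simp add: field_simps)
    show "(1 - t - ((1 - winf A) + (1 - wsup A))/2)^2 = (t - (wsup A + winf A)/2)^2" unfolding h by (rule power2_minus)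
  qed
  then show "Inf ((\<lambda>t. (t - (Sup (rsp (id_blinfun - A)) + Inf (rsp (id_blinfun - A)))/2)^2) ` rsp (id_blinfun - A)) = dl A"
    unfolding s i dl_def by (simp add: rsp_compl)
qed

lemma F5_compl: "A \<in> effects J \<Longrightarrow> F5 J (id_blinfun - A) = F5 J A"
  using compl_quant[of A] by (simp add: F5_gen[of J "id_blinfun - A"] F5_eff Fr_compl)

lemma B5_compl: "A \<in> effects J \<Longrightarrow> B5 J (id_blinfun - A) = - B5 J A"
  using compl_quant[of A] by (simp add: B5_gen[of J "id_blinfun - A"] B5_eff Br_compl)

end

lemma rsp_sim:
  fixes C Ci A :: "'a::real_normed_vector \<Rightarrow>\<^sub>L 'a"
  assumes c1: "C o\<^sub>L Ci = id_blinfun" and c2: "Ci o\<^sub>L C = id_blinfun"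
  shows "rsp (C o\<^sub>L A o\<^sub>L Ci) = rsp A"
proof -
  have a: "C (Ci x) = x" "Ci (C x) = x" for x
    using c1 c2 by (metis blinfun_apply_blinfun_compose blinfun_apply_id_blinfun)+
  have iC: "invertible_op C" "invertible_op Ci" using c1 c2 unfolding invertible_op_def by auto
  have e1: "(C o\<^sub>L A o\<^sub>L Ci) - t *\<^sub>R id_blinfun = C o\<^sub>L (A - t *\<^sub>R id_blinfun) o\<^sub>L Ci" for t
    by (rule blinfun_eqI) (simp add: bsimp a)
  have e2: "A - t *\<^sub>R id_blinfun = Ci o\<^sub>L ((C o\<^sub>L A o\<^sub>L Ci) - t *\<^sub>R id_blinfun) o\<^sub>L C" for t
    by (rule blinfun_eqI) (simp add: bsimp a)
  have "invertible_op ((C o\<^sub>L A o\<^sub>L Ci) - t *\<^sub>R id_blinfun) \<longleftrightarrow> invertible_op (A - t *\<^sub>R id_blinfun)" for t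
    by (metis e1 e2 iC inv_compose)
  then show ?thesis unfolding rsp_def by simp
qed


context
  fixes J :: "'a::{real_inner,complete_space} \<Rightarrow>\<^sub>L 'a"
  assumes nt: "\<exists>x::'a. x \<noteq> 0"
begin

lemma triv_iff:
  assumes A: "A \<in> effects J"
  shows "trivial_effect A \<longleftrightarrow> wsup A = winf A"
proof
  assume "trivial_effect A"
  then obtain l where "A = l *\<^sub>R id_blinfun" unfolding trivial_effect_def by auto
  then show "wsup A = winf A" using const_w[OF nt, of l] by simp
next
  assume "wsup A = winf A"
  then have "A = winf A *\<^sub>R id_blinfun" using w_eq_const[OF effect_symm[OF A]] by simp
  then show "trivial_effect A" using effect_facts[OF A nt] unfolding trivial_effect_def by auto
qed

lemma const_iff:
  assumes A: "A \<in> effects J"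
  shows "A = l *\<^sub>R id_blinfun \<longleftrightarrow> wsup A = l \<and> winf A = l"
proof
  assume "A = l *\<^sub>R id_blinfun"
  then show "wsup A = l \<and> winf A = l" using const_w[OF nt, of l] by simp
next
  assume "wsup A = l \<and> winf A = l"
  then show "A = l *\<^sub>R id_blinfun" using w_eq_const[OF effect_symm[OF A]] by simp
qed

lemma proj_iff:
  assumes A: "A \<in> effects J"
  shows "nontrivial_projection J A \<longleftrightarrow> wsup A = 1 \<and> winf A = 0 \<and> dl A = 1/4"
proof
  assume P: "nontrivial_projection J A"
  then have r: "rsp A = {0,1}" using proj_spec unfolding nontrivial_projection_def by blast
  note rp = rsp_props[OF effect_symm[OF A] nt]
  have i01: "Inf {0::real,1} = 0" by (rule cInf_eq_minimum) auto
  have s01: "Sup {0::real,1} = 1" by (rule cSup_eq_maximum) auto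
  have "winf A = 0" using rp(4) r i01 by simp
  moreover have "wsup A = 1" using rp(5) r s01 by simp
  moreover have "dl A = 1/4"
  proof -
    have "(\<lambda>t. (t - (wsup A + winf A)/2)^2) ` rsp A = {1/4}"
      using r \<open>winf A = 0\<close> \<open>wsup A = 1\<close> by (auto simp: power2_eq_square)
    then show ?thesis unfolding dl_def by simp
  qed
  ultimately show "wsup A = 1 \<and> winf A = 0 \<and> dl A = 1/4" by simp
next
  assume h: "wsup A = 1 \<and> winf A = 0 \<and> dl A = 1/4"
  note f = effect_facts[OF A nt]
  have sub: "rsp A \<subseteq> {0,1}"
  proof
    fix t assume t: "t \<in> rsp A"
    then have t01: "0 \<le> t" "t \<le> 1" using f(5) h by auto
    have "1/4 \<le> (t - 1/2)^2" using dl_lower[OF t] h by simp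
    moreover have "(t - 1/2)^2 = 1/4 - t * (1 - t)" by (simp add: power2_eq_square field_simps)
    ultimately have "t * (1 - t) \<le> 0" by simp
    moreover have "0 \<le> t * (1 - t)" using t01 by simp
    ultimately have "t * (1 - t) = 0" by simp
    then show "t \<in> {0,1}" by auto
  qed
  have "A o\<^sub>L A = A" by (rule proj_from_spec[OF effect_symm[OF A] nt sub])
  moreover have "A \<noteq> 0"
  proof
    assume "A = 0"
    then have "A = 0 *\<^sub>R id_blinfun" by simp
    then show False using const_iff[OF A, of 0] h by simp
  qed
  moreover have "A \<noteq> id_blinfun"
  proof
    assume "A = id_blinfun"
    then have "A = 1 *\<^sub>R id_blinfun" by simp
    then show False using const_iff[OF A, of 1] h by simp
  qed
  moreover have "selfadjoint J A" using A unfolding effects_def by auto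
  ultimately show "nontrivial_projection J A" unfolding nontrivial_projection_def by simp
qed

lemma sim_inv:
  fixes f :: "('a \<Rightarrow>\<^sub>L 'a) \<Rightarrow> real"
  assumes "\<And>X Y. rsp X = rsp Y \<Longrightarrow> f X = f Y"
  shows "similarity_invariant J f"
  unfolding similarity_invariant_def using rsp_sim assms by metis

lemma cont_F:
  shows "continuous_on (effects J) (\<lambda>A. Fr (wsup A) (winf A) (dl A))"
    "continuous_on (effects J) (\<lambda>A. Br (wsup A) (winf A) (dl A))"
  using cont_w[OF nt, of "effects J" J] unfolding Fr_def Br_def Let_def
  by (auto intro!: continuous_intros)

lemma unsharp: "unsharpness_measure J (F5 J)"
  unfolding unsharpness_measure_def sharpness_measure_def
proof (intro conjI ballI)
  fix A assume A: "A \<in> effects J"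
  interpret H "wsup A" "winf A" "dl A" by (rule H_eff[OF nt A])
  have F: "F5 J A = Fr (wsup A) (winf A) (dl A)" by (rule F5_eff[OF nt A])
  show "0 \<le> 1 - F5 J A" "1 - F5 J A \<le> 1" using Fr_bounds F by auto
  show "(1 - F5 J A = 0) = trivial_effect A" using Fr_one F triv_iff[OF A] by auto
  show "(1 - F5 J A = 1) = nontrivial_projection J A" using Fr_zero F proj_iff[OF A] by auto
  show "1 - F5 J (id_blinfun - A) = 1 - F5 J A" using F5_compl[OF nt A] by simp
next
  show "similarity_invariant J (\<lambda>A. 1 - F5 J A)"
    by (rule sim_inv) (simp add: F5_gen)
next
  show "continuous_on (effects J) (\<lambda>A. 1 - F5 J A)"
    by (rule continuous_on_eq[OF continuous_on_diff[OF continuous_on_const cont_F(1)]])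
       (simp add: F5_eff[OF nt])
qed

lemma bias: "bias_measure J (B5 J)"
  unfolding bias_measure_def
proof (intro conjI ballI)
  fix A assume A: "A \<in> effects J"
  interpret H "wsup A" "winf A" "dl A" by (rule H_eff[OF nt A])
  have B: "B5 J A = Br (wsup A) (winf A) (dl A)" by (rule B5_eff[OF nt A])
  have s: "specmax J A = wsup A" "specmin J A = winf A" using spec_eff[OF nt A] by auto
  show "-1 \<le> B5 J A" "B5 J A \<le> 1" using Br_bounds B by auto
  show "(B5 J A = 0) = ((specmax J A + specmin J A) / 2 = 1 / 2)" using Br_zero B s by simp
  show "(B5 J A = 1) = (A = id_blinfun)" using Br_one B const_iff[OF A, of 1] by simp
  show "(B5 J A = -1) = (A = 0)" using Br_mone B const_iff[OF A, of 0] by simp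
  show "B5 J (id_blinfun - A) = - B5 J A" using B5_compl[OF nt A] by simp
next
  show "similarity_invariant J (B5 J)"
    by (rule sim_inv) (simp add: B5_gen)
next
  show "continuous_on (effects J) (B5 J)"
    by (rule continuous_on_eq[OF cont_F(2)]) (simp add: B5_eff[OF nt])
qed

end

theorem mainTheorem12:
  fixes J :: "'a::{real_inner, complete_space, second_countable_topology} \<Rightarrow>\<^sub>L 'a"
  assumes "complex_structure J"
    and "\<exists>x::'a. x \<noteq> 0"
  shows "unsharpness_measure J (F5 J) \<and> bias_measure J (B5 J)"
  using unsharp[OF assms(2)] bias[OF assms(2)] by simp


end
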